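(* Let $\Phi:\{0,1\}^n\to\{0,1\}^n$, $\mu\in\{0,1\}^n$ and $\rho\in P_n$. Then: a) $\overline{W}[\Phi^\rho(\mu,\cdot)]$ is p-invariant; b) if $\underline{W}[\Phi^\rho(\mu,\cdot)]\neq\emptyset$, then $\underline{W}[\Phi^\rho(\mu,\cdot)]$ is n-invariant; c) if $\underline{W}[\omega_\rho(\mu)]\neq\emptyset$, then $\underline{W}[\omega_\rho(\mu)]$ is n-invariant.
   Context: Let $\mathbf{B}=\{0,1\}$ (discrete topology), $n\ge1$, $\Phi:\mathbf{B}^n\to\mathbf{B}^n$. For $\nu\in\mathbf{B}^n$: $\Phi^\nu_i(\mu)=\mu_i$ if $\nu_i=0$, $=\Phi_i(\mu)$ if $\nu_i=1$; $\Phi^{\alpha^0\dots\alpha^k}=\Phi^{\alpha^k}\circ\cdots\circ\Phi^{\alpha^0}$. A sequence $(\alpha^k)_{k\in\mathbf{N}}$ in $\mathbf{B}^n$ is progressive if each $\{k:\alpha^k_i=1\}$ is infinite. $Seq$ = strictly increasing real sequences unbounded above. $P_n$ = functions $\rho:\mathbf{R}\to\mathbf{B}^n$ with $\rho(t_k)=\alpha^k$, $\rho(t)=0$ for $t\notin\{t_k\}$, $\alpha$ progressive, $(t_k)\in Seq$. Orbit: $\Phi^\rho(\mu,t)=\mu$ for $t<t_0$, $=\Phi^{\alpha^0\dots\alpha^k}(\mu)$ for $t\in[t_k,t_{k+1})$; $Or_\rho(\mu)=\{\Phi^\rho(\mu,t):t\in\mathbf{R}\}$. $\omega_\rho(\mu)=\{\mu':\exists(s_k)\in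 Seq,\ \Phi^\rho(\mu,s_k)=\mu'$ for all large $k\}$. Basins: $\overline{W}[\Phi^\rho(\mu,\cdot)]=\{\mu':\exists\rho'\in P_n,\exists t',\forall t\ge t',\ \Phi^{\rho'}(\mu',t)=\Phi^\rho(\mu,t)\}$, $\underline{W}[\Phi^\rho(\mu,\cdot)]=\{\mu':\forall\rho'\in P_n,\exists t',\forall t\ge t',\ \Phi^{\rho'}(\mu',t)=\Phi^\rho(\mu,t)\}$, $\underline{W}[\omega_\rho(\mu)]=\{\mu':\forall\rho'\in P_n,\ \omega_{\rho'}(\mu')=\omega_\rho(\mu)\}$. A nonempty set $A\subset\mathbf{B}^n$ is p-invariant if for every $\mu\in A$ there is $\rho\in P_n$ with $Or_\rho(\mu)\subset A$, and n-invariant if for every $\mu\in A$ and every $\rho\in P_n$, $Or_\rho(\mu)\subset A$. *)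

theory Defs
  imports Complex_Main
begin

(* States of B^n are modelled as functions 'n \<Rightarrow> bool, with 'n a finite index type
   (CARD('n) = n); False = 0, True = 1. *)

type_synonym 'n state = "'n \<Rightarrow> bool"

definition zero_state :: "'n state" where
  "zero_state = (\<lambda>i. False)"

definition upd :: "('n state \<Rightarrow> 'n state) \<Rightarrow> 'n state \<Rightarrow> 'n state \<Rightarrow> 'n state" where
  "upd \<Phi> \<nu> \<mu> = (\<lambda>i. if \<nu> i then \<Phi> \<mu> i else \<mu> i)"

fun upd_seq :: "('n state \<Rightarrow> 'n state) \<Rightarrow> (nat \<Rightarrow> 'n state) \<Rightarrow> nat \<Rightarrow> 'n state \<Rightarrow> 'n state" where
  "upd_seq \<Phi> \<alpha> 0 \<mu> = upd \<Phi> (\<alpha> 0) \<mu>"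
| "upd_seq \<Phi> \<alpha> (Suc k) \<mu> = upd \<Phi> (\<alpha> (Suc k)) (upd_seq \<Phi> \<alpha> k \<mu>)"

definition progressive :: "(nat \<Rightarrow> 'n state) \<Rightarrow> bool" where
  "progressive \<alpha> \<longleftrightarrow> (\<forall>i. infinite {k. \<alpha> k i})"

definition Seq :: "(nat \<Rightarrow> real) set" where
  "Seq = {t. strict_mono t \<and> (\<forall>M. \<exists>k. t k > M)}"

definition rep :: "(real \<Rightarrow> 'n state) \<Rightarrow> (nat \<Rightarrow> 'n state) \<Rightarrow> (nat \<Rightarrow> real) \<Rightarrow> bool" where
  "rep \<rho> \<alpha> t \<longleftrightarrow> progressive \<alpha> \<and> t \<in> Seq \<and> (\<forall>k. \<rho> (t k) = \<alpha> k)
      \<and> (\<forall>s. s \<notin> range t \<longrightarrow> \<rho> s = zero_state)"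

definition P :: "(real \<Rightarrow> 'n state) set" where
  "P = {\<rho>. \<exists>\<alpha> t. rep \<rho> \<alpha> t}"

definition orbit_rep :: "('n state \<Rightarrow> 'n state) \<Rightarrow> (nat \<Rightarrow> 'n state) \<Rightarrow> (nat \<Rightarrow> real) \<Rightarrow> 'n state \<Rightarrow> real \<Rightarrow> 'n state" where
  "orbit_rep \<Phi> \<alpha> t \<mu> s =
     (if s < t 0 then \<mu> else upd_seq \<Phi> \<alpha> (GREATEST k. t k \<le> s) \<mu>)"

(* \<Phi>^\<rho>(\<mu>, s): computed from some representation of \<rho>; the value does not depend on
   the representation chosen (different representations differ only by inserting
   zero updates, which act as the identity). *)
definition orbit :: "('n state \<Rightarrow> 'n state) \<Rightarrow> (real \<Rightarrow> 'n state) \<Rightarrow> 'n state \<Rightarrow> real \<Rightarrow> 'n state" where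
  "orbit \<Phi> \<rho> \<mu> s = (let r = (SOME r. rep \<rho> (fst r) (snd r)) in orbit_rep \<Phi> (fst r) (snd r) \<mu> s)"

definition Or :: "('n state \<Rightarrow> 'n state) \<Rightarrow> (real \<Rightarrow> 'n state) \<Rightarrow> 'n state \<Rightarrow> 'n state set" where
  "Or \<Phi> \<rho> \<mu> = range (orbit \<Phi> \<rho> \<mu>)"

definition omega :: "('n state \<Rightarrow> 'n state) \<Rightarrow> (real \<Rightarrow> 'n state) \<Rightarrow> 'n state \<Rightarrow> 'n state set" where
  "omega \<Phi> \<rho> \<mu> = {\<mu>'. \<exists>s \<in> Seq. \<exists>K. \<forall>k\<ge>K. orbit \<Phi> \<rho> \<mu> (s k) = \<mu>'}"

definition W_upper :: "('n state \<Rightarrow> 'n state) \<Rightarrow> (real \<Rightarrow> 'n state) \<Rightarrow> 'n state \<Rightarrow> 'n state set" where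
  "W_upper \<Phi> \<rho> \<mu> = {\<mu>'. \<exists>\<rho>' \<in> P. \<exists>t'. \<forall>s\<ge>t'. orbit \<Phi> \<rho>' \<mu>' s = orbit \<Phi> \<rho> \<mu> s}"

definition W_lower :: "('n state \<Rightarrow> 'n state) \<Rightarrow> (real \<Rightarrow> 'n state) \<Rightarrow> 'n state \<Rightarrow> 'n state set" where
  "W_lower \<Phi> \<rho> \<mu> = {\<mu>'. \<forall>\<rho>' \<in> P. \<exists>t'. \<forall>s\<ge>t'. orbit \<Phi> \<rho>' \<mu>' s = orbit \<Phi> \<rho> \<mu> s}"

definition W_lower_omega :: "('n state \<Rightarrow> 'n state) \<Rightarrow> (real \<Rightarrow> 'n state) \<Rightarrow> 'n state \<Rightarrow> 'n state set" where
  "W_lower_omega \<Phi> \<rho> \<mu> = {\<mu>'. \<forall>\<rho>' \<in> P. omega \<Phi> \<rho>' \<mu>' = omega \<Phi> \<rho> \<mu>}"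

definition p_invariant :: "('n state \<Rightarrow> 'n state) \<Rightarrow> 'n state set \<Rightarrow> bool" where
  "p_invariant \<Phi> A \<longleftrightarrow> A \<noteq> {} \<and> (\<forall>\<mu>\<in>A. \<exists>\<rho>\<in>P. Or \<Phi> \<rho> \<mu> \<subseteq> A)"

definition n_invariant :: "('n state \<Rightarrow> 'n state) \<Rightarrow> 'n state set \<Rightarrow> bool" where
  "n_invariant \<Phi> A \<longleftrightarrow> A \<noteq> {} \<and> (\<forall>\<mu>\<in>A. \<forall>\<rho>\<in>P. Or \<Phi> \<rho> \<mu> \<subseteq> A)"

end

theory Submission imports Defs begin

definition upds :: "('n state \<Rightarrow> 'n state) \<Rightarrow> (nat \<Rightarrow> 'n state) \<Rightarrow> nat \<Rightarrow> 'n state \<Rightarrow> 'n state" where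
  "upds \<Phi> \<alpha> n \<mu> = foldl (\<lambda>m k. upd \<Phi> (\<alpha> k) m) \<mu> [0..<n]"

definition cnt :: "(nat \<Rightarrow> real) \<Rightarrow> real \<Rightarrow> nat" where
  "cnt t s = card {k. t k \<le> s}"

lemma upd_zero[simp]: "upd \<Phi> zero_state \<mu> = \<mu>"
  by (simp add: upd_def zero_state_def)

lemma upd_seq_upds: "upd_seq \<Phi> \<alpha> k \<mu> = upds \<Phi> \<alpha> (Suc k) \<mu>"
  by (induction k) (auto simp: upds_def)

lemma upds_add: "upds \<Phi> \<alpha> (m + j) \<mu> = upds \<Phi> (\<lambda>k. \<alpha> (m + k)) j (upds \<Phi> \<alpha> m \<mu>)"
proof -
  have "[0..<m+j] = [0..<m] @ map (\<lambda>k. m + k) [0..<j]"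
    by (induction j) auto
  then show ?thesis by (simp add: upds_def foldl_map)
qed

lemma upds_cong: "(\<And>k. k < n \<Longrightarrow> \<alpha> k = \<beta> k) \<Longrightarrow> upds \<Phi> \<alpha> n \<mu> = upds \<Phi> \<beta> n \<mu>"
  unfolding upds_def by (rule foldl_cong) auto

lemma Seq_finite:
  assumes "t \<in> Seq" shows "finite {k. t k \<le> s}"
proof -
  from assms obtain K where K: "t K > s" by (auto simp: Seq_def)
  have "{k. t k \<le> s} \<subseteq> {..<K}"
  proof
    fix k assume "k \<in> {k. t k \<le> s}"
    then have "t k \<le> s" by simp
    show "k \<in> {..<K}"
    proof (rule ccontr)
      assume "k \<notin> {..<K}" then have "K \<le> k" by simp
      then have "t K \<le> t k" using assms by (auto simp: Seq_def strict_mono_less_eq)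
      with K \<open>t k \<le> s\<close> show False by simp
    qed
  qed
  then show ?thesis by (rule finite_subset) simp
qed

lemma downclosed_lessThan:
  fixes S :: "nat set"
  assumes "finite S" "\<And>k j. k \<in> S \<Longrightarrow> j \<le> k \<Longrightarrow> j \<in> S"
  shows "S = {..<card S}"
proof -
  obtain n where n: "n \<notin> S" using assms(1) by (meson ex_new_if_finite infinite_UNIV_nat)
  define m where "m = (LEAST n. n \<notin> S)"
  have m: "m \<notin> S" unfolding m_def using n by (rule LeastI)
  have "S = {..<m}"
  proof
    show "S \<subseteq> {..<m}" using m assms(2) by (auto simp: not_less) (meson linorder_not_le)
    show "{..<m} \<subseteq> S" unfolding m_def using not_less_Least by auto
  qed
  then show ?thesis by simp
qed

lemma Seq_cnt:
  assumes "t \<in> Seq" shows "{k. t k \<le> s} = {..<cnt t s}"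
  unfolding cnt_def
proof (rule downclosed_lessThan[OF Seq_finite[OF assms]])
  fix k j assume "k \<in> {k. t k \<le> s}" "j \<le> k"
  then show "j \<in> {k. t k \<le> s}" using assms by (auto simp: Seq_def strict_mono_less_eq) (meson order_trans strict_mono_less_eq)
qed

lemma orbit_rep_upds:
  assumes "t \<in> Seq" shows "orbit_rep \<Phi> \<alpha> t \<mu> s = upds \<Phi> \<alpha> (cnt t s) \<mu>"
proof (cases "s < t 0")
  case True
  then have "cnt t s = 0" using Seq_cnt[OF assms, of s] by (metis lessThan_iff mem_Collect_eq not_gr_zero not_le)
  then show ?thesis using True by (simp add: orbit_rep_def upds_def)
next
  case False
  have S: "{k. t k \<le> s} = {..<cnt t s}" by (rule Seq_cnt[OF assms])
  have "0 \<in> {k. t k \<le> s}" using False by simp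
  then have pos: "cnt t s > 0" using S by auto
  have "(GREATEST k. t k \<le> s) = cnt t s - 1"
  proof (rule Greatest_equality)
    have "cnt t s - 1 \<in> {..<cnt t s}" using pos by simp
    then show "t (cnt t s - 1) \<le> s" using S by blast
    fix y assume "t y \<le> s"
    then have "y \<in> {..<cnt t s}" using S by blast
    then show "y \<le> cnt t s - 1" by simp
  qed
  then show ?thesis using False pos by (simp add: orbit_rep_def upd_seq_upds)
qed

definition H :: "('n state \<Rightarrow> 'n state) \<Rightarrow> (real \<Rightarrow> 'n state) \<Rightarrow> 'n state \<Rightarrow> real \<Rightarrow> 'n state" where
  "H \<Phi> \<rho> \<mu> s = foldl (\<lambda>m x. upd \<Phi> (\<rho> x) m) \<mu> (sorted_list_of_set {x. \<rho> x \<noteq> zero_state \<and> x \<le> s})"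

lemma foldl_filter_zero:
  "foldl (\<lambda>m x. upd \<Phi> (\<rho> x) m) \<mu> (filter (\<lambda>x. \<rho> x \<noteq> zero_state) xs) = foldl (\<lambda>m x. upd \<Phi> (\<rho> x) m) \<mu> xs"
  by (induction xs arbitrary: \<mu>) auto

lemma sorted_list_filter:
  assumes "finite A"
  shows "sorted_list_of_set {x\<in>A. Q x} = filter Q (sorted_list_of_set (A::real set))"
proof -
  have fin: "finite {x\<in>A. Q x}" using assms by simp
  have a: "sorted_wrt (<) (filter Q (sorted_list_of_set A))"
    using sorted_wrt_filter strict_sorted_list_of_set by blast
  have b: "set (filter Q (sorted_list_of_set A)) = {x\<in>A. Q x}" using assms by auto
  have c: "length (filter Q (sorted_list_of_set A)) = card {x\<in>A. Q x}"
    using distinct_card[of "filter Q (sorted_list_of_set A)"] b by simp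
  show ?thesis using sorted_list_of_set_unique[OF fin, of "filter Q (sorted_list_of_set A)"] a b c by blast
qed

lemma upds_H:
  assumes "rep \<rho> \<alpha> t" shows "upds \<Phi> \<alpha> (cnt t s) \<mu> = H \<Phi> \<rho> \<mu> s"
proof -
  have tS: "t \<in> Seq" using assms by (simp add: rep_def)
  have sm: "strict_mono t" using tS by (simp add: Seq_def)
  define n where "n = cnt t s"
  have S: "{k. t k \<le> s} = {..<n}" using Seq_cnt[OF tS] n_def by simp
  have al: "\<And>k. \<alpha> k = \<rho> (t k)" using assms by (simp add: rep_def)
  have "upds \<Phi> \<alpha> n \<mu> = foldl (\<lambda>m x. upd \<Phi> (\<rho> x) m) \<mu> (map t [0..<n])"
    by (simp add: upds_def foldl_map al)
  have img: "t ` {..<n} = {x \<in> range t. x \<le> s}" using S by auto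
  have "sorted_list_of_set (t ` {..<n}) = map t [0..<n]"
  proof -
    have "sorted_wrt (<) (map t [0..<n])"
      using sm by (auto simp: sorted_wrt_map strict_mono_def sorted_wrt_iff_nth_less)
    moreover have "set (map t [0..<n]) = t ` {..<n}" by auto
    moreover have "length (map t [0..<n]) = card (t ` {..<n})"
      using card_image[of t "{..<n}"] strict_mono_imp_inj_on[OF sm] by (simp add: inj_on_subset)
    ultimately show ?thesis using sorted_list_of_set_unique[of "t ` {..<n}" "map t [0..<n]"] by simp
  qed
  have fin: "finite {x \<in> range t. x \<le> s}" using img[symmetric] by simp
  have supp: "{x. \<rho> x \<noteq> zero_state \<and> x \<le> s} = {x \<in> {x \<in> range t. x \<le> s}. \<rho> x \<noteq> zero_state}"
    using assms by (auto simp: rep_def)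
  have "H \<Phi> \<rho> \<mu> s = foldl (\<lambda>m x. upd \<Phi> (\<rho> x) m) \<mu> (filter (\<lambda>x. \<rho> x \<noteq> zero_state) (sorted_list_of_set {x \<in> range t. x \<le> s}))"
    unfolding H_def supp sorted_list_filter[OF fin] ..
  also have "\<dots> = foldl (\<lambda>m x. upd \<Phi> (\<rho> x) m) \<mu> (sorted_list_of_set {x \<in> range t. x \<le> s})"
    by (rule foldl_filter_zero)
  also have "\<dots> = foldl (\<lambda>m x. upd \<Phi> (\<rho> x) m) \<mu> (map t [0..<n])"
    using img \<open>sorted_list_of_set (t ` {..<n}) = _\<close> by simp
  finally show ?thesis using \<open>upds \<Phi> \<alpha> n \<mu> = _\<close> n_def by simp
qed

lemma orbit_upds:
  assumes "rep \<rho> \<alpha> t" shows "orbit \<Phi> \<rho> \<mu> s = upds \<Phi> \<alpha> (cnt t s) \<mu>"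
proof -
  define r where "r = (SOME r. rep \<rho> (fst r) (snd r))"
  have r: "rep \<rho> (fst r) (snd r)" unfolding r_def
  proof (rule someI_ex)
    show "\<exists>r. rep \<rho> (fst r) (snd r)" using assms by (intro exI[of _ "(\<alpha>,t)"]) simp
  qed
  have "orbit \<Phi> \<rho> \<mu> s = orbit_rep \<Phi> (fst r) (snd r) \<mu> s" by (simp add: orbit_def r_def Let_def)
  also have "\<dots> = upds \<Phi> (fst r) (cnt (snd r) s) \<mu>" using r by (simp add: orbit_rep_upds rep_def)
  also have "\<dots> = H \<Phi> \<rho> \<mu> s" using upds_H[OF r] .
  also have "\<dots> = upds \<Phi> \<alpha> (cnt t s) \<mu>" using upds_H[OF assms] by simp
  finally show ?thesis .
qed

definition mk :: "(nat \<Rightarrow> 'n state) \<Rightarrow> (nat \<Rightarrow> real) \<Rightarrow> real \<Rightarrow> 'n state" where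
  "mk \<alpha> t x = (if x \<in> range t then \<alpha> (inv t x) else zero_state)"

lemma rep_mk:
  assumes "t \<in> Seq" "progressive \<alpha>" shows "rep (mk \<alpha> t) \<alpha> t"
proof -
  have "inj t" using assms(1) by (simp add: Seq_def strict_mono_imp_inj_on)
  then show ?thesis using assms by (auto simp: rep_def mk_def)
qed

lemma mk_P: "t \<in> Seq \<Longrightarrow> progressive \<alpha> \<Longrightarrow> mk \<alpha> t \<in> P"
  using rep_mk unfolding P_def by blast

lemma cnt_shift:
  assumes "t3 \<in> Seq" "t2 \<in> Seq" "\<And>k. t3 k \<le> s \<longleftrightarrow> k < m \<or> (m \<le> k \<and> t2 (k-m) \<le> s)"
  shows "cnt t3 s = m + cnt t2 s"
proof -
  have "{k. t3 k \<le> s} = {..<m + cnt t2 s}"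
  proof -
    have "\<And>k. t2 k \<le> s \<longleftrightarrow> k < cnt t2 s" using Seq_cnt[OF assms(2), of s] by blast
    then show ?thesis using assms(3) by auto
  qed
  then show ?thesis by (simp add: cnt_def)
qed

lemma Seq_shift: "t \<in> Seq \<Longrightarrow> (\<lambda>k. t (m + k)) \<in> Seq"
  unfolding Seq_def
proof safe
  assume sm: "strict_mono t" and ub: "\<forall>M. \<exists>k. M < t k"
  show "strict_mono (\<lambda>k. t (m + k))" using sm by (simp add: strict_mono_def)
  fix M obtain k where "M < t k" using ub by blast
  then have "M < t (m + k)" using sm
    by (meson le_add2 order_less_le_trans strict_mono_less_eq)
  then show "\<exists>k. M < t (m + k)" by blast
qed

lemma prog_shift: "progressive \<alpha> \<Longrightarrow> progressive (\<lambda>k. \<alpha> (m + k))"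
  unfolding progressive_def
proof safe
  fix i assume inf: "\<forall>i. infinite {k. \<alpha> k i}" and fin: "finite {k. \<alpha> (m + k) i}"
  have "{k. \<alpha> k i} \<subseteq> {..<m} \<union> (\<lambda>k. m + k) ` {k. \<alpha> (m + k) i}"
  proof
    fix k assume "k \<in> {k. \<alpha> k i}"
    then show "k \<in> {..<m} \<union> (\<lambda>k. m + k) ` {k. \<alpha> (m + k) i}"
      by (cases "k < m") (auto intro!: image_eqI[of _ _ "k - m"])
  qed
  moreover have "finite ({..<m} \<union> (\<lambda>k. m + k) ` {k. \<alpha> (m + k) i})" using fin by simp
  ultimately show False using inf finite_subset by blast
qed

lemma shift_lemma:
  assumes "\<rho>' \<in> P"
  shows "\<exists>\<rho>3\<in>P. \<forall>s\<ge>s0. orbit \<Phi> \<rho>3 (orbit \<Phi> \<rho>' \<mu>' s0) s = orbit \<Phi> \<rho>' \<mu>' s"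
proof -
  obtain \<alpha> t where r: "rep \<rho>' \<alpha> t" using assms by (auto simp: P_def)
  have tS: "t \<in> Seq" and pa: "progressive \<alpha>" using r by (auto simp: rep_def)
  define m where "m = cnt t s0"
  define t2 where "t2 = (\<lambda>k. t (m + k))"
  define a2 where "a2 = (\<lambda>k. \<alpha> (m + k))"
  have t2S: "t2 \<in> Seq" unfolding t2_def using Seq_shift[OF tS] .
  have pa2: "progressive a2" unfolding a2_def using prog_shift[OF pa] .
  have r2: "rep (mk a2 t2) a2 t2" by (rule rep_mk[OF t2S pa2])
  have m_iff: "\<And>k. t k \<le> s0 \<longleftrightarrow> k < m" using Seq_cnt[OF tS, of s0] m_def by blast
  show ?thesis
  proof (intro bexI[of _ "mk a2 t2"] allI impI)
    show "mk a2 t2 \<in> P" by (rule mk_P[OF t2S pa2])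
    fix s assume "s0 \<le> s"
    have c: "cnt t s = m + cnt t2 s"
    proof (rule cnt_shift[OF tS t2S])
      fix k show "t k \<le> s \<longleftrightarrow> k < m \<or> (m \<le> k \<and> t2 (k-m) \<le> s)"
        using m_iff[of k] \<open>s0 \<le> s\<close> by (auto simp: t2_def)
    qed
    have "orbit \<Phi> \<rho>' \<mu>' s = upds \<Phi> \<alpha> (m + cnt t2 s) \<mu>'" using orbit_upds[OF r] c by simp
    also have "\<dots> = upds \<Phi> a2 (cnt t2 s) (upds \<Phi> \<alpha> m \<mu>')" unfolding a2_def by (rule upds_add)
    also have "\<dots> = orbit \<Phi> (mk a2 t2) (orbit \<Phi> \<rho>' \<mu>' s0) s"
      using orbit_upds[OF r2] orbit_upds[OF r] m_def by simp
    finally show "orbit \<Phi> (mk a2 t2) (orbit \<Phi> \<rho>' \<mu>' s0) s = orbit \<Phi> \<rho>' \<mu>' s" by simp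
  qed
qed

lemma concat_lemma:
  assumes "\<rho>' \<in> P" "\<rho>'' \<in> P"
  shows "\<exists>\<rho>3\<in>P. \<exists>T. \<forall>s\<ge>T. orbit \<Phi> \<rho>3 \<mu>' s = orbit \<Phi> \<rho>'' (orbit \<Phi> \<rho>' \<mu>' s0) s"
proof -
  obtain \<alpha>1 t1 where r1: "rep \<rho>' \<alpha>1 t1" using assms by (auto simp: P_def)
  obtain \<alpha>2 t2 where r2: "rep \<rho>'' \<alpha>2 t2" using assms by (auto simp: P_def)
  have t1S: "t1 \<in> Seq" using r1 by (auto simp: rep_def)
  have t2S: "t2 \<in> Seq" and pa2: "progressive \<alpha>2" using r2 by (auto simp: rep_def)
  have sm2: "strict_mono t2" and ub2: "\<forall>M. \<exists>k. M < t2 k" using t2S by (auto simp: Seq_def)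
  define m where "m = cnt t1 s0"
  define c where "c = t2 0"
  define a3 where "a3 = (\<lambda>k. if k < m then \<alpha>1 k else \<alpha>2 (k - m))"
  define t3 where "t3 = (\<lambda>k. if k < m then c - real (m - k) else t2 (k - m))"
  have t3S: "t3 \<in> Seq" unfolding Seq_def
  proof safe
    show "strict_mono t3" unfolding strict_mono_Suc_iff
    proof
      fix k
      consider "Suc k < m" | "Suc k = m" | "m \<le> k" by linarith
      then show "t3 k < t3 (Suc k)"
      proof cases
        case 1 then show ?thesis by (auto simp: t3_def of_nat_diff)
      next
        case 2 then show ?thesis by (auto simp: t3_def c_def)
      next
        case 3 then show ?thesis using sm2 by (auto simp: t3_def strict_mono_def Suc_diff_le)
      qed
    qed
    fix M obtain k where "M < t2 k" using ub2 by blast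
    then have "M < t3 (m + k)" by (simp add: t3_def)
    then show "\<exists>k. M < t3 k" by blast
  qed
  have pa3: "progressive a3" unfolding progressive_def
  proof
    fix i
    have "(\<lambda>j. m + j) ` {j. \<alpha>2 j i} \<subseteq> {k. a3 k i}" by (auto simp: a3_def)
    moreover have "infinite ((\<lambda>j. m + j) ` {j. \<alpha>2 j i})"
      using pa2 finite_imageD[of "\<lambda>j. m + j" "{j. \<alpha>2 j i}"] by (auto simp: progressive_def inj_on_def)
    ultimately show "infinite {k. a3 k i}" using finite_subset by blast
  qed
  have r3: "rep (mk a3 t3) a3 t3" by (rule rep_mk[OF t3S pa3])
  show ?thesis
  proof (intro bexI[of _ "mk a3 t3"] exI[of _ c] allI impI)
    show "mk a3 t3 \<in> P" by (rule mk_P[OF t3S pa3])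
    fix s assume "c \<le> s"
    have cn: "cnt t3 s = m + cnt t2 s"
    proof (rule cnt_shift[OF t3S t2S])
      fix k show "t3 k \<le> s \<longleftrightarrow> k < m \<or> (m \<le> k \<and> t2 (k-m) \<le> s)"
        using \<open>c \<le> s\<close> by (auto simp: t3_def)
    qed
    have sh: "(\<lambda>j. a3 (m + j)) = \<alpha>2" by (auto simp: a3_def)
    have pre: "upds \<Phi> a3 m \<mu>' = upds \<Phi> \<alpha>1 m \<mu>'" by (rule upds_cong) (simp add: a3_def)
    have "orbit \<Phi> (mk a3 t3) \<mu>' s = upds \<Phi> a3 (m + cnt t2 s) \<mu>'" using orbit_upds[OF r3] cn by simp
    also have "\<dots> = upds \<Phi> \<alpha>2 (cnt t2 s) (upds \<Phi> a3 m \<mu>')" using upds_add[of \<Phi> a3 m] sh by simp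
    also have "\<dots> = orbit \<Phi> \<rho>'' (orbit \<Phi> \<rho>' \<mu>' s0) s"
      using orbit_upds[OF r2] orbit_upds[OF r1] pre m_def by simp
    finally show "orbit \<Phi> (mk a3 t3) \<mu>' s = orbit \<Phi> \<rho>'' (orbit \<Phi> \<rho>' \<mu>' s0) s" .
  qed
qed

lemma omega_eq:
  assumes "\<forall>s\<ge>T. orbit \<Phi> \<rho>1 \<mu>1 s = orbit \<Phi> \<rho>2 \<mu>2 s"
  shows "omega \<Phi> \<rho>1 \<mu>1 = omega \<Phi> \<rho>2 \<mu>2"
proof -
  have key: "\<And>r1 m1 r2 m2 x. \<forall>s\<ge>T. orbit \<Phi> r1 m1 s = orbit \<Phi> r2 m2 s \<Longrightarrow> x \<in> omega \<Phi> r1 m1 \<Longrightarrow> x \<in> omega \<Phi> r2 m2"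
  proof -
    fix r1 m1 r2 m2 x assume eq: "\<forall>s\<ge>T. orbit \<Phi> r1 m1 s = orbit \<Phi> r2 m2 s" and x: "x \<in> omega \<Phi> r1 m1"
    then obtain sq K where sq: "sq \<in> Seq" and K: "\<forall>k\<ge>K. orbit \<Phi> r1 m1 (sq k) = x" by (auto simp: omega_def)
    obtain K' where K': "T < sq K'" using sq by (auto simp: Seq_def)
    have "\<forall>k\<ge>max K K'. orbit \<Phi> r2 m2 (sq k) = x"
    proof safe
      fix k assume k: "max K K' \<le> k"
      have "sq K' \<le> sq k" using sq k by (auto simp: Seq_def strict_mono_less_eq)
      then show "orbit \<Phi> r2 m2 (sq k) = x" using eq K k K' by (metis max.bounded_iff less_le_trans order.strict_implies_order)
    qed
    then show "x \<in> omega \<Phi> r2 m2" using sq unfolding omega_def by blast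
  qed
  show ?thesis using key[OF assms] key[of \<rho>2 \<mu>2 \<rho>1 \<mu>1] assms by auto
qed

theorem theorem52:
  fixes \<Phi> :: "('n::finite) state \<Rightarrow> 'n state" and \<mu> :: "'n state"
    and \<rho> :: "real \<Rightarrow> 'n state"
  assumes "\<rho> \<in> P"
  shows "p_invariant \<Phi> (W_upper \<Phi> \<rho> \<mu>)
    \<and> (W_lower \<Phi> \<rho> \<mu> \<noteq> {} \<longrightarrow> n_invariant \<Phi> (W_lower \<Phi> \<rho> \<mu>))
    \<and> (W_lower_omega \<Phi> \<rho> \<mu> \<noteq> {} \<longrightarrow> n_invariant \<Phi> (W_lower_omega \<Phi> \<rho> \<mu>))"
proof (intro conjI impI)
  show "p_invariant \<Phi> (W_upper \<Phi> \<rho> \<mu>)" unfolding p_invariant_def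
  proof safe
    show "W_upper \<Phi> \<rho> \<mu> = {} \<Longrightarrow> False" using assms by (auto simp: W_upper_def)
    fix \<mu>' assume "\<mu>' \<in> W_upper \<Phi> \<rho> \<mu>"
    then obtain \<rho>' T where \<rho>': "\<rho>' \<in> P" and T: "\<forall>s\<ge>T. orbit \<Phi> \<rho>' \<mu>' s = orbit \<Phi> \<rho> \<mu> s"
      by (auto simp: W_upper_def)
    have "Or \<Phi> \<rho>' \<mu>' \<subseteq> W_upper \<Phi> \<rho> \<mu>"
    proof
      fix \<nu> assume "\<nu> \<in> Or \<Phi> \<rho>' \<mu>'"
      then obtain s0 where \<nu>: "\<nu> = orbit \<Phi> \<rho>' \<mu>' s0" by (auto simp: Or_def)
      obtain \<rho>3 where \<rho>3: "\<rho>3 \<in> P" "\<forall>s\<ge>s0. orbit \<Phi> \<rho>3 \<nu> s = orbit \<Phi> \<rho>' \<mu>' s"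
        using shift_lemma[OF \<rho>', of s0 \<Phi> \<mu>'] \<nu> by blast
      have "\<forall>s\<ge>max s0 T. orbit \<Phi> \<rho>3 \<nu> s = orbit \<Phi> \<rho> \<mu> s" using \<rho>3(2) T by auto
      then show "\<nu> \<in> W_upper \<Phi> \<rho> \<mu>" using \<rho>3(1) unfolding W_upper_def by blast
    qed
    then show "\<exists>r\<in>P. Or \<Phi> r \<mu>' \<subseteq> W_upper \<Phi> \<rho> \<mu>" using \<rho>' by (rule bexI[of _ "\<rho>'"])
  qed
next
  assume ne: "W_lower \<Phi> \<rho> \<mu> \<noteq> {}"
  show "n_invariant \<Phi> (W_lower \<Phi> \<rho> \<mu>)" unfolding n_invariant_def
  proof (intro conjI ballI subsetI)
    show "W_lower \<Phi> \<rho> \<mu> \<noteq> {}" by (rule ne)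
    fix \<mu>' :: "'n state" and \<rho>' :: "real \<Rightarrow> 'n state" and \<nu> assume mu': "\<mu>' \<in> W_lower \<Phi> \<rho> \<mu>" and \<rho>': "\<rho>' \<in> P" and "\<nu> \<in> Or \<Phi> \<rho>' \<mu>'"
    then obtain s0 where \<nu>: "\<nu> = orbit \<Phi> \<rho>' \<mu>' s0" by (auto simp: Or_def)
    show "\<nu> \<in> W_lower \<Phi> \<rho> \<mu>" unfolding W_lower_def
    proof (safe)
      fix \<rho>'' :: "real \<Rightarrow> 'n state" assume \<rho>'': "\<rho>'' \<in> P"
      obtain \<rho>3 T where \<rho>3: "\<rho>3 \<in> P" "\<forall>s\<ge>T. orbit \<Phi> \<rho>3 \<mu>' s = orbit \<Phi> \<rho>'' \<nu> s"
        using concat_lemma[OF \<rho>' \<rho>'', of \<Phi> \<mu>' s0] \<nu> by blast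
      obtain T' where T': "\<forall>s\<ge>T'. orbit \<Phi> \<rho>3 \<mu>' s = orbit \<Phi> \<rho> \<mu> s"
        using mu' \<rho>3(1) by (auto simp: W_lower_def)
      have "\<forall>s\<ge>max T T'. orbit \<Phi> \<rho>'' \<nu> s = orbit \<Phi> \<rho> \<mu> s" using \<rho>3(2) T' by auto
      then show "\<exists>t'. \<forall>s\<ge>t'. orbit \<Phi> \<rho>'' \<nu> s = orbit \<Phi> \<rho> \<mu> s" by blast
    qed
  qed
next
  assume ne: "W_lower_omega \<Phi> \<rho> \<mu> \<noteq> {}"
  show "n_invariant \<Phi> (W_lower_omega \<Phi> \<rho> \<mu>)" unfolding n_invariant_def
  proof (intro conjI ballI subsetI)
    show "W_lower_omega \<Phi> \<rho> \<mu> \<noteq> {}" by (rule ne)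
    fix \<mu>' :: "'n state" and \<rho>' :: "real \<Rightarrow> 'n state" and \<nu> assume mu': "\<mu>' \<in> W_lower_omega \<Phi> \<rho> \<mu>" and \<rho>': "\<rho>' \<in> P" and "\<nu> \<in> Or \<Phi> \<rho>' \<mu>'"
    then obtain s0 where \<nu>: "\<nu> = orbit \<Phi> \<rho>' \<mu>' s0" by (auto simp: Or_def)
    show "\<nu> \<in> W_lower_omega \<Phi> \<rho> \<mu>" unfolding W_lower_omega_def
    proof (intro CollectI ballI)
      fix \<rho>'' :: "real \<Rightarrow> 'n state" assume \<rho>'': "\<rho>'' \<in> P"
      obtain \<rho>3 T where \<rho>3: "\<rho>3 \<in> P" "\<forall>s\<ge>T. orbit \<Phi> \<rho>3 \<mu>' s = orbit \<Phi> \<rho>'' \<nu> s"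
        using concat_lemma[OF \<rho>' \<rho>'', of \<Phi> \<mu>' s0] \<nu> by blast
      have "omega \<Phi> \<rho>'' \<nu> = omega \<Phi> \<rho>3 \<mu>'" using omega_eq[OF \<rho>3(2)] by simp
      also have "\<dots> = omega \<Phi> \<rho> \<mu>" using mu' \<rho>3(1) by (auto simp: W_lower_omega_def)
      finally show "omega \<Phi> \<rho>'' \<nu> = omega \<Phi> \<rho> \<mu>" .
    qed
  qed
qed

end
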